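(* Let $m,n,r,d$ be integers with $m,n\ge2$, $d\ge1$ and $0<r<\min\{m,n\}$, and let $$\mathcal{A}=\Big\{L(\lambda)R(\lambda): L\in\mathbb{C}[\lambda]^{m\times r},\ R\in\mathbb{C}[\lambda]^{r\times n},\ \deg(L_{*i})+\deg(R_{i*})=d\ \text{for } i=1,\dots,r\Big\}.$$ Then $\mathbb{C}[\lambda]^{m\times n}_{d,r}=\overline{\mathcal{A}}$.
   Context: $\mathbb{C}[\lambda]^{m\times n}_{d,r}$ is the set of complex $m\times n$ polynomial matrices of degree at most $d$ and normal rank (rank over $\mathbb{C}(\lambda)$) at most $r$. Degree of a polynomial vector: maximum degree of entries, $\deg0=-\infty$. $L_{*i}$: $i$th column of $L$; $R_{i*}$: $i$th row of $R$. Closure is in the space $\mathbb{C}[\lambda]^{m\times n}_d$ of polynomial matrices of degree at most $d$ with the metric $\mathrm{dist}(P,Q)=(\sum_{i=0}^d\|P_i-Q_i\|_F^2)^{1/2}$, $P_i,Q_i$ the coefficients of $\lambda^i$. *)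

theory Defs
  imports "Jordan_Normal_Form.DL_Rank" "HOL-Computational_Algebra.Polynomial_Factorial"
    "HOL-Library.Extended_Real"
begin

definition pvec_degree :: "complex poly vec \<Rightarrow> ereal" where
  "pvec_degree v =
     (if \<forall>i<dim_vec v. v $ i = 0 then -\<infinity>
      else ereal (real (Max {degree (v $ i) | i. i < dim_vec v})))"

definition polymat_space :: "nat \<Rightarrow> nat \<Rightarrow> nat \<Rightarrow> complex poly mat set" where
  "polymat_space m n d =
     {P. P \<in> carrier_mat m n \<and> (\<forall>i<m. \<forall>j<n. degree (P $$ (i, j)) \<le> d)}"

definition normal_rank :: "complex poly mat \<Rightarrow> nat" where
  "normal_rank P = vec_space.rank (dim_row P) (map_mat to_fract P)"

definition polymat_rank_le :: "nat \<Rightarrow> nat \<Rightarrow> nat \<Rightarrow> nat \<Rightarrow> complex poly mat set" where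
  "polymat_rank_le m n d r = {P \<in> polymat_space m n d. normal_rank P \<le> r}"

definition pm_dist :: "nat \<Rightarrow> complex poly mat \<Rightarrow> complex poly mat \<Rightarrow> real" where
  "pm_dist d P Q = sqrt (\<Sum>k\<le>d. \<Sum>i<dim_row P. \<Sum>j<dim_col P.
      (cmod (coeff (P $$ (i, j)) k - coeff (Q $$ (i, j)) k))\<^sup>2)"

definition pm_closure :: "nat \<Rightarrow> nat \<Rightarrow> nat \<Rightarrow> complex poly mat set \<Rightarrow> complex poly mat set" where
  "pm_closure m n d A =
     {P \<in> polymat_space m n d. \<forall>\<epsilon>>0. \<exists>Q\<in>A. pm_dist d P Q < \<epsilon>}"

definition prod_set :: "nat \<Rightarrow> nat \<Rightarrow> nat \<Rightarrow> nat \<Rightarrow> complex poly mat set" where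
  "prod_set m n r d =
     {L * R | L R. L \<in> carrier_mat m r \<and> R \<in> carrier_mat r n \<and>
        (\<forall>i<r. pvec_degree (col L i) + pvec_degree (row R i) = ereal (real d))}"

end

theory Submission
  imports Defs "HOL-Computational_Algebra.Fundamental_Theorem_Algebra"
begin

lemma mat_delete_last_row_indep:
  fixes h :: "nat \<Rightarrow> nat \<Rightarrow> 'a::comm_ring_1"
  shows "mat_delete (mat (Suc k) (Suc k) (\<lambda>(a,b). if a<k then h a b else z b)) k b
       = mat_delete (mat (Suc k) (Suc k) (\<lambda>(a,b). if a<k then h a b else 0)) k b"
  by (rule eq_matI) (auto simp: mat_delete_def)

lemma det_last_row:
  fixes h :: "nat \<Rightarrow> nat \<Rightarrow> 'a::comm_ring_1"
  shows "det (mat (Suc k) (Suc k) (\<lambda>(a,b). if a<k then h a b else z b))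
     = (\<Sum>b<Suc k. z b * cofactor (mat (Suc k) (Suc k) (\<lambda>(a,b). if a < k then h a b else 0)) k b)"
proof -
  have "det (mat (Suc k) (Suc k) (\<lambda>(a,b). if a<k then h a b else z b))
     = (\<Sum>b<Suc k. (mat (Suc k) (Suc k) (\<lambda>(a,b). if a<k then h a b else z b)) $$ (k,b) *
         cofactor (mat (Suc k) (Suc k) (\<lambda>(a,b). if a<k then h a b else z b)) k b)"
    by (rule laplace_expansion_row) auto
  also have "\<dots> = (\<Sum>b<Suc k. z b * cofactor (mat (Suc k) (Suc k) (\<lambda>(a,b). if a < k then h a b else 0)) k b)"
    by (rule sum.cong[OF refl]) (simp add: cofactor_def mat_delete_last_row_indep[of k h z])
  finally show ?thesis .
qed

lemma cofactor_last:
  fixes h :: "nat \<Rightarrow> nat \<Rightarrow> 'a::comm_ring_1"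
  shows "cofactor (mat (Suc k) (Suc k) (\<lambda>(a,b). if a < k then h a b else 0)) k k
       = det (mat k k (\<lambda>(a,b). h a b))"
proof -
  have "mat_delete (mat (Suc k) (Suc k) (\<lambda>(a,b). if a < k then h a b else 0)) k k = mat k k (\<lambda>(a,b). h a b)"
    by (rule eq_matI) (auto simp: mat_delete_def)
  then show ?thesis by (simp add: cofactor_def)
qed

lemma det_mat0: "det (mat 0 0 f) = (1::'a::comm_ring_1)"
  by (simp add: det_def)

lemma row_select:
  fixes B :: "nat \<Rightarrow> nat \<Rightarrow> 'a::comm_ring_1"
  assumes "\<forall>v. (\<forall>i<n. (\<Sum>b<k. B i b * v b) = 0) \<longrightarrow> (\<forall>b<k. v b = 0)"
  shows "\<exists>f. (\<forall>a<k. f a < n) \<and> det (mat k k (\<lambda>(a,b). B (f a) b)) \<noteq> 0"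
  using assms
proof (induction k)
  case 0
  then show ?case by (auto simp: det_mat0)
next
  case (Suc k)
  have "\<forall>v. (\<forall>i<n. (\<Sum>b<k. B i b * v b) = 0) \<longrightarrow> (\<forall>b<k. v b = 0)"
  proof (rule allI, rule impI)
    fix v assume h: "\<forall>i<n. (\<Sum>b<k. B i b * v b) = 0"
    define v' where "v' b = (if b < k then v b else 0)" for b
    have "\<forall>i<n. (\<Sum>b<Suc k. B i b * v' b) = 0"
      using h by (simp add: v'_def)
    then have "\<forall>b<Suc k. v' b = 0" using Suc.prems by blast
    then show "\<forall>b<k. v b = 0" by (metis less_Suc_eq v'_def)
  qed
  then obtain f' where f': "\<forall>a<k. f' a < n" "det (mat k k (\<lambda>(a,b). B (f' a) b)) \<noteq> 0"
    using Suc.IH by blast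
  define C where "C b = cofactor (mat (Suc k) (Suc k) (\<lambda>(a,b). if a < k then B (f' a) b else 0)) k b" for b
  have Ck: "C k \<noteq> 0" using f'(2) cofactor_last[of k "\<lambda>a b. B (f' a) b"] by (simp add: C_def)
  have "\<exists>i<n. det (mat (Suc k) (Suc k) (\<lambda>(a,b). if a<k then B (f' a) b else B i b)) \<noteq> 0"
  proof (rule ccontr)
    assume "\<not> ?thesis"
    then have "\<forall>i<n. (\<Sum>b<Suc k. B i b * C b) = 0"
      using det_last_row[of k "\<lambda>a b. B (f' a) b"] by (simp add: C_def)
    then have "\<forall>b<Suc k. C b = 0" using Suc.prems by blast
    with Ck show False by simp
  qed
  then obtain i where i: "i < n" "det (mat (Suc k) (Suc k) (\<lambda>(a,b). if a<k then B (f' a) b else B i b)) \<noteq> 0"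
    by blast
  define f where "f a = (if a < k then f' a else i)" for a
  have "mat (Suc k) (Suc k) (\<lambda>(a,b). B (f a) b) = mat (Suc k) (Suc k) (\<lambda>(a,b). if a<k then B (f' a) b else B i b)"
    by (rule cong[of "mat (Suc k) (Suc k)"], simp, auto simp: f_def)
  then have "det (mat (Suc k) (Suc k) (\<lambda>(a,b). B (f a) b)) \<noteq> 0" using i by simp
  moreover have "\<forall>a<Suc k. f a < n" using f'(1) i(1) by (simp add: f_def)
  ultimately show ?case by blast
qed

lemma cols_mat_sel:
  "col (mat n k (\<lambda>(i,b). A $$ (i, g b))) b = col A (g b)" if "b < k" "A \<in> carrier_mat n nc" "g b < nc"
  using that by (intro eq_vecI) auto

lemma (in vec_space) rank_ge_minor':
  assumes A: "A \<in> carrier_mat n nc" and f: "\<forall>a<k. f a < n" and g: "\<forall>b<k. g b < nc"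
    and d: "det (mat k k (\<lambda>(a,b). A $$ (f a, g b))) \<noteq> 0"
  shows "k \<le> rank A"
proof -
  define B where "B = mat n k (\<lambda>(i,b). A $$ (i, g b))"
  define M where "M = mat k k (\<lambda>(a,b). A $$ (f a, g b))"
  have B: "B \<in> carrier_mat n k" by (simp add: B_def)
  have M: "M \<in> carrier_mat k k" by (simp add: M_def)
  have colB: "col B b = col A (g b)" if "b < k" for b
    unfolding B_def using cols_mat_sel[OF that A] g that by blast
  have dist: "distinct (cols B)"
  proof -
    have "col B b \<noteq> col B b'" if "b < k" "b' < k" "b \<noteq> b'" for b b'
    proof
      assume e: "col B b = col B b'"
      have "col M b = col M b'"
      proof (rule eq_vecI)
        fix a assume "a < dim_vec (col M b')"
        then have a: "a < k" using M by simp
        have "A $$ (f a, g b) = A $$ (f a, g b')"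
          using arg_cong[OF e, of "\<lambda>v. v $ f a"] colB that f a A by (auto simp: col_def)
        then show "col M b $ a = col M b' $ a" using a that by (simp add: M_def)
      qed (simp add: M_def)
      then have "det M = 0" using det_identical_cols[OF M that(3,1,2)] by simp
      then show False using d by (simp add: M_def)
    qed
    then show ?thesis using B unfolding cols_def distinct_map
        by (auto simp: inj_on_def) blast
  qed
  have li: "lin_indpt (set (cols B))"
  proof
    assume "lin_dep (set (cols B))"
    then obtain v where v: "v \<in> carrier_vec k" "v \<noteq> 0\<^sub>v k" "B *\<^sub>v v = 0\<^sub>v n"
      using lin_depE[OF B _ dist] by blast
    have "M *\<^sub>v v = 0\<^sub>v k"
    proof (rule eq_vecI)
      fix a assume "a < dim_vec (0\<^sub>v k)"
      then have a: "a < k" by simp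
      have "(M *\<^sub>v v) $ a = row M a \<bullet> v" using a M by simp
      also have "\<dots> = row B (f a) \<bullet> v"
        by (rule arg_cong[of _ _ "\<lambda>x. x \<bullet> v"], rule eq_vecI, insert a f, auto simp: M_def B_def)
      also have "\<dots> = (B *\<^sub>v v) $ f a" using f a B by simp
      also have "\<dots> = 0" using v(3) f a by simp
      finally show "(M *\<^sub>v v) $ a = 0\<^sub>v k $ a" using a by simp
    qed (insert M, simp)
    then have "det M = 0" using det_0_iff_vec_prod_zero_field[OF M] v by blast
    then show False using d by (simp add: M_def)
  qed
  have sub: "set (cols B) \<subseteq> set (cols A)"
  proof
    fix c assume "c \<in> set (cols B)"
    then obtain b where b: "b < k" "c = col B b" using B unfolding cols_def by auto
    then have "c = col A (g b)" using colB by simp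
    then show "c \<in> set (cols A)" using g b A unfolding cols_def by auto
  qed
  have "card (set (cols B)) = k" using distinct_card[OF dist] B by simp
  then show ?thesis using rank_ge_card_indpt[OF A sub li] by simp
qed

lemma (in vec_space) minor_from_rank:
  assumes A: "A \<in> carrier_mat n nc" and k: "k \<le> rank A"
  shows "\<exists>f g. (\<forall>a<k. f a < n) \<and> (\<forall>b<k. g b < nc) \<and> det (mat k k (\<lambda>(a,b). A $$ (f a, g b))) \<noteq> 0"
proof -
  obtain S where S: "maximal S (\<lambda>T. T \<subseteq> set (cols A) \<and> lin_indpt T)"
    using maximal_exists[of "(\<lambda>T. T \<subseteq> set (cols A) \<and> lin_indpt T)" "card (set (cols A))" "{}"]
    by (meson List.finite_set card_mono empty_iff empty_subsetI finite_lin_indpt2 rev_finite_subset)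
  have rS: "rank A = card S" using rank_card_indpt[OF A S] .
  have S1: "S \<subseteq> set (cols A)" "lin_indpt S" using S by (auto simp: maximal_def)
  have finS: "finite S" using S1(1) finite_subset by blast
  obtain T where T: "T \<subseteq> S" "card T = k" using obtain_subset_with_card_n[of k S] k rS by metis
  have finT: "finite T" using T finS finite_subset by blast
  have liT: "lin_indpt T" using subset_li_is_li[OF S1(2) T(1)] .
  obtain ts where ts: "set ts = T" "distinct ts" using finite_distinct_list[OF finT] by blast
  have lts: "length ts = k" using ts T(2) distinct_card by fastforce
  have ex: "\<exists>j. j < nc \<and> col A j = ts ! b" if "b < k" for b
  proof -
    have "ts ! b \<in> set (cols A)" using that lts ts T S1 nth_mem by blast
    then show ?thesis using A unfolding cols_def by auto
  qed
  define g where "g b = (SOME j. j < nc \<and> col A j = ts ! b)" for b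
  have g: "g b < nc" "col A (g b) = ts ! b" if "b < k" for b
    using someI_ex[OF ex[OF that]] unfolding g_def by auto
  define BM where "BM = mat n k (\<lambda>(i,b). A $$ (i, g b))"
  have BM: "BM \<in> carrier_mat n k" by (simp add: BM_def)
  have colBM: "col BM b = ts ! b" if "b < k" for b
  proof -
    have "col BM b = col A (g b)" using g(1)[OF that] that A by (auto simp: BM_def intro!: eq_vecI)
    then show ?thesis using g[OF that] by simp
  qed
  have cBM: "cols BM = ts"
    by (rule nth_equalityI) (use lts BM colBM in auto)
  have indep: "\<forall>v. (\<forall>i<n. (\<Sum>b<k. A $$ (i, g b) * v b) = 0) \<longrightarrow> (\<forall>b<k. v b = 0)"
  proof (rule allI, rule impI, rule ccontr)
    fix v assume h: "\<forall>i<n. (\<Sum>b<k. A $$ (i, g b) * v b) = 0" and "\<not> (\<forall>b<k. v b = 0)"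
    then obtain b0 where b0: "b0 < k" "v b0 \<noteq> 0" by blast
    define w where "w = vec k v"
    have w: "w \<in> carrier_vec k" "w \<noteq> 0\<^sub>v k"
      using b0 by (auto simp: w_def dest!: arg_cong[of _ _ "\<lambda>x. x $ b0"])
    have "BM *\<^sub>v w = 0\<^sub>v n"
    proof (rule eq_vecI)
      fix i assume "i < dim_vec (0\<^sub>v n)"
      then have i: "i < n" by simp
      have "(BM *\<^sub>v w) $ i = (\<Sum>b<k. A $$ (i, g b) * v b)"
        using i BM by (simp add: BM_def w_def scalar_prod_def atLeast0LessThan)
      then show "(BM *\<^sub>v w) $ i = 0\<^sub>v n $ i" using h i by simp
    qed (insert BM, simp)
    then have "lin_dep (set (cols BM))" using lin_depI[OF BM w] cBM ts by simp
    then show False using liT cBM ts by simp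
  qed
  obtain f where f: "\<forall>a<k. f a < n" "det (mat k k (\<lambda>(a,b). A $$ (f a, g b))) \<noteq> 0"
    using row_select[OF indep] by blast
  show ?thesis using f g by blast
qed

lemma to_fract_crh: "comm_ring_hom (to_fract :: 'a::idom \<Rightarrow> 'a fract)"
  by unfold_locales auto

lemma mult_index': "A \<in> carrier_mat n k \<Longrightarrow> B \<in> carrier_mat k m \<Longrightarrow> i < n \<Longrightarrow> j < m \<Longrightarrow>
  (A * B) $$ (i,j) = (\<Sum>c<k. A $$ (i,c) * B $$ (c,j))"
  by (simp add: scalar_prod_def atLeast0LessThan)

lemma sum_if_less: "(s::nat) \<le> r \<Longrightarrow> (\<Sum>b<r. if b < s then F b else 0) = (\<Sum>b<s. F b)"
proof -
  assume "s \<le> r"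
  then have "{..<r} \<inter> {x. x < s} = {..<s}" by auto
  then show ?thesis by (simp add: sum.If_cases)
qed

lemma minor_map_to_fract:
  "f ` {..<k} \<subseteq> {..<dim_row P} \<Longrightarrow> g ` {..<k} \<subseteq> {..<dim_col P} \<Longrightarrow>
   mat k k (\<lambda>(a,b). map_mat to_fract P $$ (f a, g b)) = map_mat to_fract (mat k k (\<lambda>(a,b). P $$ (f a, g b)))"
  by (rule eq_matI) (auto simp: image_subset_iff)

lemma M2:
  fixes P :: "'a::idom mat"
  assumes P: "P \<in> carrier_mat m n" and f: "\<forall>a<k. f a < m" and g: "\<forall>b<k. g b < n"
    and d: "det (mat k k (\<lambda>(a,b). P $$ (f a, g b))) \<noteq> 0"
  shows "k \<le> vec_space.rank m (map_mat to_fract P)"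
proof -
  have "mat k k (\<lambda>(a,b). map_mat to_fract P $$ (f a, g b)) = map_mat to_fract (mat k k (\<lambda>(a,b). P $$ (f a, g b)))"
    using f g P by (intro minor_map_to_fract) auto
  then have "det (mat k k (\<lambda>(a,b). map_mat to_fract P $$ (f a, g b))) \<noteq> 0"
    using d comm_ring_hom.hom_det[OF to_fract_crh, of "mat k k (\<lambda>(a,b). P $$ (f a, g b))"] by (simp only: to_fract_eq_0_iff) simp
  moreover have "map_mat to_fract P \<in> carrier_mat m n" using P by simp
  ultimately show ?thesis using vec_space.rank_ge_minor' f g by blast
qed

lemma M1:
  fixes P :: "'a::idom mat"
  assumes P: "P \<in> carrier_mat m n" and k: "k \<le> vec_space.rank m (map_mat to_fract P)"
  shows "\<exists>f g. (\<forall>a<k. f a < m) \<and> (\<forall>b<k. g b < n) \<and> det (mat k k (\<lambda>(a,b). P $$ (f a, g b))) \<noteq> 0"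
proof -
  have "map_mat to_fract P \<in> carrier_mat m n" using P by simp
  then obtain f g where fg: "\<forall>a<k. f a < m" "\<forall>b<k. g b < n"
    "det (mat k k (\<lambda>(a,b). map_mat to_fract P $$ (f a, g b))) \<noteq> 0"
    using vec_space.minor_from_rank k by blast
  have "mat k k (\<lambda>(a,b). map_mat to_fract P $$ (f a, g b)) = map_mat to_fract (mat k k (\<lambda>(a,b). P $$ (f a, g b)))"
    using fg P by (intro minor_map_to_fract) auto
  then have "det (mat k k (\<lambda>(a,b). P $$ (f a, g b))) \<noteq> 0"
    using fg(3) comm_ring_hom.hom_det[OF to_fract_crh, of "mat k k (\<lambda>(a,b). P $$ (f a, g b))"] by (simp only: to_fract_eq_0_iff) simp
  then show ?thesis using fg by blast
qed

lemma normal_rank_mult: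
  fixes L R :: "'a::idom mat"
  assumes L: "L \<in> carrier_mat m r" and R: "R \<in> carrier_mat r n"
  shows "vec_space.rank m (map_mat to_fract (L * R)) \<le> r"
proof (rule ccontr)
  assume "\<not> ?thesis"
  then have "Suc r \<le> vec_space.rank m (map_mat to_fract (L * R))" by simp
  moreover have LR: "L * R \<in> carrier_mat m n" using L R by simp
  ultimately obtain f g where fg: "\<forall>a<Suc r. f a < m" "\<forall>b<Suc r. g b < n"
    "det (mat (Suc r) (Suc r) (\<lambda>(a,b). (L * R) $$ (f a, g b))) \<noteq> 0"
    using M1 by blast
  define Lt where "Lt = mat (Suc r) (Suc r) (\<lambda>(a,c). if c < r then L $$ (f a, c) else 0)"
  define Rt where "Rt = mat (Suc r) (Suc r) (\<lambda>(c,b). if c < r then R $$ (c, g b) else 0)"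
  have Lt: "Lt \<in> carrier_mat (Suc r) (Suc r)" and Rt: "Rt \<in> carrier_mat (Suc r) (Suc r)"
    by (auto simp: Lt_def Rt_def)
  have "Lt * Rt = mat (Suc r) (Suc r) (\<lambda>(a,b). (L * R) $$ (f a, g b))"
  proof (rule eq_matI)
    fix a b assume ab: "a < dim_row (mat (Suc r) (Suc r) (\<lambda>(a,b). (L * R) $$ (f a, g b)))"
      "b < dim_col (mat (Suc r) (Suc r) (\<lambda>(a,b). (L * R) $$ (f a, g b)))"
    then have a: "a < Suc r" and b: "b < Suc r" by auto
    have "(Lt * Rt) $$ (a,b) = (\<Sum>c<Suc r. Lt $$ (a,c) * Rt $$ (c,b))"
      using mult_index'[OF Lt Rt a b] .
    also have "\<dots> = (\<Sum>c<Suc r. if c < r then L $$ (f a, c) * R $$ (c, g b) else 0)"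
      using a b by (intro sum.cong) (auto simp: Lt_def Rt_def)
    also have "\<dots> = (\<Sum>c<r. L $$ (f a, c) * R $$ (c, g b))"
      by (rule sum_if_less) simp
    also have "\<dots> = (L * R) $$ (f a, g b)"
      using mult_index'[OF L R, of "f a" "g b"] fg a b by simp
    finally show "(Lt * Rt) $$ (a,b) = mat (Suc r) (Suc r) (\<lambda>(a,b). (L * R) $$ (f a, g b)) $$ (a,b)"
      using a b by simp
  qed (auto simp: Lt_def Rt_def)
  moreover have "det Lt = 0"
  proof -
    have "det Lt = (\<Sum>i<Suc r. Lt $$ (i, r) * cofactor Lt i r)"
      by (rule laplace_expansion_column[OF Lt]) simp
    also have "\<dots> = 0" by (simp add: Lt_def)
    finally show ?thesis .
  qed
  ultimately have "det (mat (Suc r) (Suc r) (\<lambda>(a,b). (L * R) $$ (f a, g b))) = 0"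
    using det_mult[OF Lt Rt] by simp
  then show False using fg(3) by simp
qed

lemma init_fact:
  fixes P :: "'a::idom mat"
  assumes P: "P \<in> carrier_mat m n" and rk: "vec_space.rank m (map_mat to_fract P) \<le> r"
  shows "\<exists>q L Y. q \<noteq> 0 \<and> (\<forall>i<m. \<forall>j<n. q * P $$ (i,j) = (\<Sum>b<r. L i b * Y b j))"
proof -
  define s where "s = vec_space.rank m (map_mat to_fract P)"
  obtain f g where fg: "\<forall>a<s. f a < m" "\<forall>b<s. g b < n"
    and d: "det (mat s s (\<lambda>(a,b). P $$ (f a, g b))) \<noteq> 0"
    using M1[OF P, of s] s_def by blast
  define g' where "g' j b = (if b < s then g b else j)" for j b
  define C where "C j b = cofactor (mat (Suc s) (Suc s) (\<lambda>(a,b). if a < s then P $$ (f a, g' j b) else 0)) s b" for j b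
  have key: "det (mat s s (\<lambda>(a,b). P $$ (f a, g b))) * P $$ (i,j) = (\<Sum>b<s. P $$ (i, g b) * (- C j b))"
    if i: "i < m" and j: "j < n" for i j
  proof -
    define f' where "f' a = (if a < s then f a else i)" for a
    have "det (mat (Suc s) (Suc s) (\<lambda>(a,b). P $$ (f' a, g' j b))) = 0"
    proof (rule ccontr)
      assume "\<not> ?thesis"
      then have "Suc s \<le> vec_space.rank m (map_mat to_fract P)"
        using M2[OF P, of "Suc s" f' "g' j"] fg i j by (auto simp: f'_def g'_def)
      then show False by (simp add: s_def)
    qed
    moreover have "mat (Suc s) (Suc s) (\<lambda>(a,b). P $$ (f' a, g' j b)) =
        mat (Suc s) (Suc s) (\<lambda>(a,b). if a < s then P $$ (f a, g' j b) else P $$ (i, g' j b))"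
      by (rule cong[of "mat (Suc s) (Suc s)"], simp, auto simp: f'_def)
    ultimately have "0 = (\<Sum>b<Suc s. P $$ (i, g' j b) * C j b)"
      using det_last_row[of s "\<lambda>a b. P $$ (f a, g' j b)" "\<lambda>b. P $$ (i, g' j b)"] by (simp add: C_def)
    also have "\<dots> = (\<Sum>b<s. P $$ (i, g b) * C j b) + P $$ (i, j) * C j s"
      by (simp add: g'_def)
    also have "C j s = det (mat s s (\<lambda>(a,b). P $$ (f a, g b)))"
    proof -
      have "C j s = det (mat s s (\<lambda>(a,b). P $$ (f a, g' j b)))"
        unfolding C_def by (rule cofactor_last)
      also have "mat s s (\<lambda>(a,b). P $$ (f a, g' j b)) = mat s s (\<lambda>(a,b). P $$ (f a, g b))"
        by (rule eq_matI) (auto simp: g'_def)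
      finally show ?thesis .
    qed
    finally show ?thesis by (simp add: sum_negf algebra_simps eq_neg_iff_add_eq_0)
  qed
  define L where "L i b = (if b < s then P $$ (i, g b) else 0)" for i b
  define Y where "Y b j = (if b < s then - C j b else 0)" for b j
  have sr: "s \<le> r" using rk s_def by simp
  have "\<forall>i<m. \<forall>j<n. det (mat s s (\<lambda>(a,b). P $$ (f a, g b))) * P $$ (i,j) = (\<Sum>b<r. L i b * Y b j)"
  proof (intro allI impI)
    fix i j assume "i < m" "j < n"
    have "(\<Sum>b<r. L i b * Y b j) = (\<Sum>b<r. if b < s then P $$ (i, g b) * (- C j b) else 0)"
      by (rule sum.cong) (auto simp: L_def Y_def)
    also have "\<dots> = (\<Sum>b<s. P $$ (i, g b) * (- C j b))" by (rule sum_if_less[OF sr])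
    finally show "det (mat s s (\<lambda>(a,b). P $$ (f a, g b))) * P $$ (i,j) = (\<Sum>b<r. L i b * Y b j)"
      using key[OF \<open>i < m\<close> \<open>j < n\<close>] by simp
  qed
  then show ?thesis using d by blast
qed

definition cdg :: "nat \<Rightarrow> (nat \<Rightarrow> 'a::zero poly) \<Rightarrow> nat" where
  "cdg m c = Max ((\<lambda>a. degree (c a)) ` {..<m})"

definition csz :: "nat \<Rightarrow> (nat \<Rightarrow> 'a::zero poly) \<Rightarrow> nat" where
  "csz m c = (if \<exists>a<m. c a \<noteq> 0 then Suc (cdg m c) else 0)"

definition mu :: "nat \<Rightarrow> nat \<Rightarrow> (nat \<Rightarrow> nat \<Rightarrow> 'a::zero poly) \<Rightarrow> nat" where
  "mu m r L = (\<Sum>i<r. csz m (\<lambda>a. L a i))"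

definition rel :: "nat \<Rightarrow> nat \<Rightarrow> nat \<Rightarrow> (nat \<Rightarrow> nat \<Rightarrow> 'a::comm_ring_1) \<Rightarrow> 'a \<Rightarrow> (nat \<Rightarrow> nat \<Rightarrow> 'a) \<Rightarrow> (nat \<Rightarrow> nat \<Rightarrow> 'a) \<Rightarrow> bool" where
  "rel m n r P q L Y = (\<forall>a<m. \<forall>j<n. q * P a j = (\<Sum>b<r. L a b * Y b j))"

lemma deg_le_cdg: "a < m \<Longrightarrow> degree (c a) \<le> cdg m c"
  unfolding cdg_def by (rule Max_ge) auto

lemma cdg_le: "0 < m \<Longrightarrow> (\<And>a. a < m \<Longrightarrow> degree (c a) \<le> e) \<Longrightarrow> cdg m c \<le> e"
  unfolding cdg_def by (subst Max_le_iff) auto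

lemma cdg_attained: "0 < m \<Longrightarrow> \<exists>a<m. degree (c a) = cdg m c"
proof -
  assume "0 < m"
  then have "cdg m c \<in> (\<lambda>a. degree (c a)) ` {..<m}" unfolding cdg_def
    by (intro Max_in) auto
  then show ?thesis by auto
qed

lemma csz_less:
  assumes nz: "\<exists>a<m. c a \<noteq> 0" and u: "\<forall>a<m. u a = 0 \<or> degree (u a) < cdg m c"
  shows "csz m u < csz m c"
proof (cases "\<exists>a<m. u a \<noteq> 0")
  case False
  then have "csz m u = 0" by (simp add: csz_def)
  moreover have "csz m c = Suc (cdg m c)" using nz by (simp add: csz_def)
  ultimately show ?thesis by simp
next
  case True
  then obtain a0 where a0: "a0 < m" "u a0 \<noteq> 0" by blast
  then have pos: "0 < cdg m c" using u by fastforce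
  have "cdg m u \<le> cdg m c - 1"
    using a0 u pos by (intro cdg_le) force+
  then show ?thesis using True nz pos by (simp add: csz_def)
qed

lemma reduce:
  fixes L Y :: "nat \<Rightarrow> nat \<Rightarrow> 'a::field poly"
  assumes rl: "rel m n r P q L Y" and i: "i < r" and wi: "w i = [:c:]" and c: "c \<noteq> 0"
    and u: "\<forall>a<m. g * u a = (\<Sum>b<r. w b * L a b)"
  shows "rel m n r P q (\<lambda>a b. if b = i then u a else L a b)
           (\<lambda>b j. if b = i then [:1/c:] * (g * Y i j) else Y b j - [:1/c:] * (w b * Y i j))"
  unfolding rel_def
proof (intro allI impI)
  fix a j assume a: "a < m" and j: "j < n"
  let ?R = "{..<r} - {i}"
  have fin: "finite {..<r}" by simp
  have iin: "i \<in> {..<r}" using i by simp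
  have S1: "(\<Sum>b<r. (if b = i then u a else L a b) *
      (if b = i then [:1/c:] * (g * Y i j) else Y b j - [:1/c:] * (w b * Y i j)))
     = u a * ([:1/c:] * (g * Y i j)) + (\<Sum>b\<in>?R. L a b * (Y b j - [:1/c:] * (w b * Y i j)))"
    by (subst sum.remove[OF fin iin]) (auto intro!: sum.cong)
  have S2: "(\<Sum>b<r. w b * L a b) = [:c:] * L a i + (\<Sum>b\<in>?R. w b * L a b)"
    using sum.remove[OF fin iin, of "\<lambda>b. w b * L a b"] wi by simp
  have S3: "(\<Sum>b<r. L a b * Y b j) = L a i * Y i j + (\<Sum>b\<in>?R. L a b * Y b j)"
    using sum.remove[OF fin iin] by simp
  have S4: "(\<Sum>b\<in>?R. L a b * (Y b j - [:1/c:] * (w b * Y i j)))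
       = (\<Sum>b\<in>?R. L a b * Y b j) - [:1/c:] * Y i j * (\<Sum>b\<in>?R. w b * L a b)"
    by (simp add: algebra_simps sum_subtractf sum_distrib_left)
  have cc: "[:1/c:] * [:c:] = (1 :: 'a poly)" using c by (simp add: one_pCons)
  have "u a * ([:1/c:] * (g * Y i j)) = [:1/c:] * Y i j * (g * u a)" by (simp add: algebra_simps)
  also have "\<dots> = [:1/c:] * Y i j * ([:c:] * L a i + (\<Sum>b\<in>?R. w b * L a b))" using u a S2 by simp
  also have "\<dots> = ([:1/c:] * [:c:]) * (L a i * Y i j) + [:1/c:] * Y i j * (\<Sum>b\<in>?R. w b * L a b)"
    by (simp add: algebra_simps)
  also have "\<dots> = L a i * Y i j + [:1/c:] * Y i j * (\<Sum>b\<in>?R. w b * L a b)"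
    by (simp only: cc mult.left_neutral)
  finally have S5: "u a * ([:1/c:] * (g * Y i j)) = L a i * Y i j + [:1/c:] * Y i j * (\<Sum>b\<in>?R. w b * L a b)" .
  have "q * P a j = (\<Sum>b<r. L a b * Y b j)" using rl a j by (simp add: rel_def)
  then show "q * P a j = (\<Sum>b<r. (if b = i then u a else L a b) *
      (if b = i then [:1/c:] * (g * Y i j) else Y b j - [:1/c:] * (w b * Y i j)))"
    using S1 S3 S4 S5 by simp
qed

lemma mu_less:
  assumes i: "i < r" and lt: "csz m u < csz m (\<lambda>a. L a i)"
  shows "mu m r (\<lambda>a b. if b = i then u a else L a b) < mu m r L"
  unfolding mu_def
proof (rule sum_strict_mono_ex1)
  show "\<forall>x\<in>{..<r}. csz m (\<lambda>a. if x = i then u a else L a x) \<le> csz m (\<lambda>a. L a x)"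
  proof
    fix x assume "x \<in> {..<r}"
    show "csz m (\<lambda>a. if x = i then u a else L a x) \<le> csz m (\<lambda>a. L a x)"
    proof (cases "x = i")
      case True
      then show ?thesis using lt by simp
    qed simp
  qed
  show "\<exists>a\<in>{..<r}. csz m (\<lambda>aa. if a = i then u aa else L aa a) < csz m (\<lambda>aa. L aa a)"
    using i lt by (intro bexI[of _ i]) auto
qed simp

lemma no_reduce:
  fixes L Y :: "nat \<Rightarrow> nat \<Rightarrow> 'a::field poly"
  assumes minL: "\<forall>L'. (\<exists>q Y. q \<noteq> 0 \<and> rel m n r P q L' Y) \<longrightarrow> mu m r L \<le> mu m r L'"
    and rl: "rel m n r P q L Y" and q: "q \<noteq> 0" and i: "i < r" and nz: "\<exists>a<m. L a i \<noteq> 0"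
    and wi: "w i = [:c:]" and c: "c \<noteq> 0"
    and u: "\<forall>a<m. g * u a = (\<Sum>b<r. w b * L a b)"
    and ud: "\<forall>a<m. u a = 0 \<or> degree (u a) < cdg m (\<lambda>a. L a i)"
  shows False
proof -
  have "mu m r (\<lambda>a b. if b = i then u a else L a b) < mu m r L"
    using mu_less[of i r m u L, OF i csz_less[OF nz ud]] .
  moreover have "mu m r L \<le> mu m r (\<lambda>a b. if b = i then u a else L a b)"
    using minL reduce[OF rl i wi c u] q by blast
  ultimately show False by simp
qed

lemma rel_normalize:
  assumes "rel m n r P q L Y"
  shows "rel m n r P q L (\<lambda>b j. if \<exists>a<m. L a b \<noteq> 0 then Y b j else 0)"
  using assms unfolding rel_def
proof (intro allI impI)
  fix a j assume h: "\<forall>a<m. \<forall>j<n. q * P a j = (\<Sum>b<r. L a b * Y b j)" and a: "a < m" and j: "j < n"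
  have "(\<Sum>b<r. L a b * Y b j) = (\<Sum>b<r. L a b * (if \<exists>a<m. L a b \<noteq> 0 then Y b j else 0))"
    using a by (intro sum.cong) auto
  then show "q * P a j = (\<Sum>b<r. L a b * (if \<exists>a<m. L a b \<noteq> 0 then Y b j else 0))"
    using h a j by simp
qed

lemma exists_max_on:
  fixes h :: "nat \<Rightarrow> nat"
  assumes "finite B" "B \<noteq> {}"
  shows "\<exists>i\<in>B. \<forall>b\<in>B. h b \<le> h i"
proof -
  have "Max (h ` B) \<in> h ` B" using assms by (intro Max_in) auto
  then obtain i where "i \<in> B" "h i = Max (h ` B)" by auto
  then show ?thesis using assms by (metis Max_ge finite_imageI image_eqI)
qed

lemma stepA:
  fixes P L :: "nat \<Rightarrow> nat \<Rightarrow> complex poly"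
  assumes minL: "\<forall>L'. (\<exists>q Y. q \<noteq> 0 \<and> rel m n r P q L' Y) \<longrightarrow> mu m r L \<le> mu m r L'"
    and adm: "\<exists>q Y. q \<noteq> 0 \<and> rel m n r P q L Y"
  shows "\<exists>X. rel m n r P 1 L X"
proof -
  obtain q0 Y0 where q0: "q0 \<noteq> 0 \<and> rel m n r P q0 L Y0" using adm by blast
  have "\<exists>p. (fst p \<noteq> 0 \<and> rel m n r P (fst p) L (snd p)) \<and>
     (\<forall>p'. (fst p' \<noteq> 0 \<and> rel m n r P (fst p') L (snd p')) \<longrightarrow> degree (fst p) \<le> degree (fst p'))"
    by (rule ex_has_least_nat[of _ "(q0, Y0)"]) (use q0 in simp)
  then obtain q Y0' where qY: "q \<noteq> 0" "rel m n r P q L Y0'"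
    and qmin: "\<And>q' Y'. q' \<noteq> 0 \<Longrightarrow> rel m n r P q' L Y' \<Longrightarrow> degree q \<le> degree q'"
    by (metis fst_conv snd_conv)
  define Y where "Y b j = (if \<exists>a<m. L a b \<noteq> 0 then Y0' b j else 0)" for b j
  have rlY: "rel m n r P q L Y" unfolding Y_def by (rule rel_normalize[OF qY(2)])
  have Ynz: "\<exists>a<m. L a b \<noteq> 0" if "Y b j \<noteq> 0" for b j
    using that by (auto simp: Y_def split: if_splits)
  have dq: "degree q = 0"
  proof (rule ccontr)
    assume "degree q \<noteq> 0"
    then obtain z where z: "poly q z = 0"
      using fundamental_theorem_of_algebra[of q] constant_degree[of q] by auto
    let ?g = "[:-z, 1:] :: complex poly"
    have g0: "?g \<noteq> 0" by simp
    have dg: "degree ?g = 1" by simp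
    show False
    proof (cases "\<forall>b<r. \<forall>j<n. poly (Y b j) z = 0")
      case True
      define q' where "q' = q div ?g"
      define Y' where "Y' b j = Y b j div ?g" for b j
      have qq: "q = ?g * q'"
      proof -
        have "?g dvd q" using z by (simp only: poly_eq_0_iff_dvd)
        then show ?thesis unfolding q'_def by (simp only: dvd_mult_div_cancel)
      qed
      have YY: "Y b j = ?g * Y' b j" if "b < r" "j < n" for b j
      proof -
        have "?g dvd Y b j" using True that by (simp only: poly_eq_0_iff_dvd)
        then show ?thesis unfolding Y'_def by (simp only: dvd_mult_div_cancel)
      qed
      have q'0: "q' \<noteq> 0" using qq qY(1) by auto
      have "rel m n r P q' L Y'" unfolding rel_def
      proof (intro allI impI)
        fix a j assume a: "a < m" and j: "j < n"
        have "?g * (q' * P a j) = q * P a j" unfolding qq by (simp only: mult.assoc)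
        also have "\<dots> = (\<Sum>b<r. L a b * Y b j)" using rlY a j by (simp add: rel_def)
        also have "\<dots> = (\<Sum>b<r. ?g * (L a b * Y' b j))"
        proof (rule sum.cong[OF refl])
          fix b assume "b \<in> {..<r}"
          then have "Y b j = ?g * Y' b j" using YY j by simp
          then show "L a b * Y b j = ?g * (L a b * Y' b j)" by (simp only: mult.left_commute)
        qed
        also have "\<dots> = ?g * (\<Sum>b<r. L a b * Y' b j)" by (simp add: sum_distrib_left)
        finally show "q' * P a j = (\<Sum>b<r. L a b * Y' b j)" using g0 mult_left_cancel by blast
      qed
      then have "degree q \<le> degree q'" using qmin q'0 by blast
      moreover have "degree q = 1 + degree q'" using qq q'0 g0 degree_mult_eq dg by metis
      ultimately show False by simp
    next
      case False
      then obtain b0 j0 where b0: "b0 < r" "j0 < n" "poly (Y b0 j0) z \<noteq> 0" by blast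
      define y where "y b = poly (Y b j0) z" for b
      define B where "B = {b. b < r \<and> y b \<noteq> 0}"
      have finB: "finite B" by (simp add: B_def)
      have neB: "B \<noteq> {}" using b0 by (auto simp: B_def y_def)
      obtain i where i: "i \<in> B" and imax: "\<forall>b\<in>B. cdg m (\<lambda>a. L a b) \<le> cdg m (\<lambda>a. L a i)"
        using exists_max_on[OF finB neB, of "\<lambda>b. cdg m (\<lambda>a. L a b)"] by blast
      have ir: "i < r" and yi: "y i \<noteq> 0" using i by (auto simp: B_def)
      have nz: "\<exists>a<m. L a i \<noteq> 0"
      proof -
        have "Y i j0 \<noteq> 0" using yi by (auto simp: y_def)
        then show ?thesis using Ynz by blast
      qed
      define s where "s a = (\<Sum>b<r. [:y b:] * L a b)" for a
      define u where "u a = s a div ?g" for a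
      have ps: "poly (s a) z = 0" if a: "a < m" for a
      proof -
        have "poly (s a) z = (\<Sum>b<r. poly (L a b) z * poly (Y b j0) z)"
          by (simp add: s_def poly_sum y_def algebra_simps)
        also have "\<dots> = poly (\<Sum>b<r. L a b * Y b j0) z" by (simp add: poly_sum)
        also have "\<dots> = poly (q * P a j0) z" using rlY a b0(2) by (simp add: rel_def)
        also have "\<dots> = 0" using z by simp
        finally show ?thesis .
      qed
      have gu: "\<forall>a<m. ?g * u a = (\<Sum>b<r. [:y b:] * L a b)"
      proof (intro allI impI)
        fix a assume a: "a < m"
        have "?g dvd s a" using ps[OF a] by (simp only: poly_eq_0_iff_dvd)
        then show "?g * u a = (\<Sum>b<r. [:y b:] * L a b)" unfolding u_def s_def[symmetric] by (simp only: dvd_mult_div_cancel)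
      qed
      have ud: "\<forall>a<m. u a = 0 \<or> degree (u a) < cdg m (\<lambda>a. L a i)"
      proof (intro allI impI)
        fix a assume a: "a < m"
        show "u a = 0 \<or> degree (u a) < cdg m (\<lambda>a. L a i)"
        proof (cases "u a = 0")
          case False
          have sa: "s a = ?g * u a" using gu a by (simp add: s_def)
          have "degree (s a) = 1 + degree (u a)" using sa False g0 degree_mult_eq dg by metis
          moreover have "degree (s a) \<le> cdg m (\<lambda>a. L a i)"
            unfolding s_def
          proof (rule degree_sum_le)
            fix b assume b: "b \<in> {..<r}"
            show "degree ([:y b:] * L a b) \<le> cdg m (\<lambda>a. L a i)"
            proof (cases "y b = 0")
              case False
              then have "b \<in> B" using b by (simp add: B_def)
              then have "cdg m (\<lambda>a. L a b) \<le> cdg m (\<lambda>a. L a i)" using imax by blast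
              moreover have "degree (L a b) \<le> cdg m (\<lambda>a. L a b)" using deg_le_cdg[OF a] .
              moreover have "degree ([:y b:] * L a b) \<le> degree (L a b)"
                using degree_mult_le[of "[:y b:]" "L a b"] by simp
              ultimately show ?thesis by linarith
            qed simp
          qed simp
          ultimately show ?thesis by simp
        qed simp
      qed
      show False
        using no_reduce[OF minL rlY qY(1) ir nz, of "\<lambda>b. [:y b:]" "y i" ?g u] gu ud yi by simp
    qed
  qed
  then obtain q0 where qc: "q = [:q0:]" by (rule degree_eq_zeroE)
  then have q00: "q0 \<noteq> 0" using qY(1) by simp
  define X where "X b j = [:1/q0:] * Y b j" for b j
  have "rel m n r P 1 L X" unfolding rel_def
  proof (intro allI impI)
    fix a j assume a: "a < m" and j: "j < n"
    have "1 * P a j = [:1/q0:] * (q * P a j)" using q00 qc by (simp add: one_pCons)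
    also have "\<dots> = [:1/q0:] * (\<Sum>b<r. L a b * Y b j)" using rlY a j by (simp add: rel_def)
    also have "\<dots> = (\<Sum>b<r. L a b * X b j)" by (simp add: X_def sum_distrib_left algebra_simps)
    finally show "1 * P a j = (\<Sum>b<r. L a b * X b j)" .
  qed
  then show ?thesis by blast
qed

lemma coeff_mult_le_sum:
  fixes p q :: "'a::comm_semiring_1 poly"
  assumes "degree p \<le> i" "degree q \<le> k"
  shows "coeff (p * q) (i + k) = coeff p i * coeff q k"
proof (cases "degree p = i \<and> degree q = k")
  case True
  then show ?thesis using coeff_mult_degree_sum[of p q] by simp
next
  case False
  then have "degree p < i \<or> degree q < k" using assms by auto
  moreover have "degree (p * q) \<le> degree p + degree q" by (rule degree_mult_le)
  ultimately have "degree (p * q) < i + k" using assms by linarith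
  then have "coeff (p * q) (i + k) = 0" by (simp add: coeff_eq_0)
  moreover have "coeff p i * coeff q k = 0"
    using \<open>degree p < i \<or> degree q < k\<close> by (auto simp: coeff_eq_0)
  ultimately show ?thesis by simp
qed

lemma stepB:
  fixes P L X :: "nat \<Rightarrow> nat \<Rightarrow> complex poly"
  assumes minL: "\<forall>L'. (\<exists>q Y. q \<noteq> 0 \<and> rel m n r P q L' Y) \<longrightarrow> mu m r L \<le> mu m r L'"
    and rl: "rel m n r P 1 L X"
    and degP: "\<forall>a<m. \<forall>j<n. degree (P a j) \<le> d"
  shows "\<forall>b<r. \<forall>j<n. (if \<exists>a<m. L a b \<noteq> 0 then X b j else 0) \<noteq> 0 \<longrightarrow>
            cdg m (\<lambda>a. L a b) + degree (if \<exists>a<m. L a b \<noteq> 0 then X b j else 0) \<le> d"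
proof (rule ccontr)
  define Xh where "Xh b j = (if \<exists>a<m. L a b \<noteq> 0 then X b j else 0)" for b j
  have rlX: "rel m n r P 1 L Xh" unfolding Xh_def by (rule rel_normalize[OF rl])
  have Xnz: "\<exists>a<m. L a b \<noteq> 0" if "Xh b j \<noteq> 0" for b j
    using that by (auto simp: Xh_def split: if_splits)
  assume "\<not> ?thesis"
  then obtain b1 j where b1: "b1 < r" "j < n" "Xh b1 j \<noteq> 0" "d < cdg m (\<lambda>a. L a b1) + degree (Xh b1 j)"
    unfolding Xh_def by auto
  define F where "F b = cdg m (\<lambda>a. L a b) + degree (Xh b j)" for b
  define T where "T = {b. b < r \<and> Xh b j \<noteq> 0}"
  have finT: "finite T" by (simp add: T_def)
  have b1T: "b1 \<in> T" using b1 by (simp add: T_def)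
  define t where "t = Max (F ` T)"
  have Ft: "F b \<le> t" if "b \<in> T" for b using that finT by (simp add: t_def)
  have dt: "d < t" using Ft[OF b1T] b1(4) by (simp add: F_def)
  define B where "B = {b \<in> T. F b = t}"
  have finB: "finite B" using finT by (simp add: B_def)
  have neB: "B \<noteq> {}"
  proof -
    have "t \<in> F ` T" unfolding t_def using finT b1T by (intro Max_in) auto
    then show ?thesis by (auto simp: B_def)
  qed
  obtain i where i: "i \<in> B" and imax: "\<forall>b\<in>B. cdg m (\<lambda>a. L a b) \<le> cdg m (\<lambda>a. L a i)"
    using exists_max_on[OF finB neB, of "\<lambda>b. cdg m (\<lambda>a. L a b)"] by blast
  have ir: "i < r" and Xi: "Xh i j \<noteq> 0" using i by (auto simp: B_def T_def)
  have nz: "\<exists>a<m. L a i \<noteq> 0" using Xnz[OF Xi] .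
  define y where "y b = (if b \<in> B then lead_coeff (Xh b j) else 0)" for b
  have yi: "y i \<noteq> 0" using i Xi by (simp add: y_def)
  define ci where "ci = cdg m (\<lambda>a. L a i)"
  have C: "(\<Sum>b<r. y b * coeff (L a b) (cdg m (\<lambda>a. L a b))) = 0" if a: "a < m" for a
  proof -
    have "coeff (P a j) t = 0" using degP a b1(2) dt by (intro coeff_eq_0) force
    moreover have "P a j = (\<Sum>b<r. L a b * Xh b j)" using rlX a b1(2) by (simp add: rel_def)
    ultimately have "(\<Sum>b<r. coeff (L a b * Xh b j) t) = 0" by (simp add: coeff_sum)
    moreover have "coeff (L a b * Xh b j) t = y b * coeff (L a b) (cdg m (\<lambda>a. L a b))" if b: "b < r" for b
    proof (cases "b \<in> T")
      case False
      then have "Xh b j = 0" using b by (simp add: T_def)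
      moreover have "b \<notin> B" using False by (simp add: B_def)
      ultimately show ?thesis by (simp add: y_def)
    next
      case bT: True
      show ?thesis
      proof (cases "b \<in> B")
        case False
        then have "F b < t" using Ft[OF bT] bT by (simp add: B_def)
        moreover have "degree (L a b * Xh b j) \<le> F b"
          using degree_mult_le[of "L a b" "Xh b j"] deg_le_cdg[OF a, of "\<lambda>a. L a b"] by (simp add: F_def)
        ultimately have "coeff (L a b * Xh b j) t = 0" by (intro coeff_eq_0) simp
        then show ?thesis using False by (simp add: y_def)
      next
        case True
        then have "t = cdg m (\<lambda>a. L a b) + degree (Xh b j)" by (simp add: B_def F_def)
        then have "coeff (L a b * Xh b j) t = coeff (L a b) (cdg m (\<lambda>a. L a b)) * coeff (Xh b j) (degree (Xh b j))"
          using coeff_mult_le_sum[OF deg_le_cdg[OF a, of "\<lambda>a. L a b"] order_refl] by simp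
        then show ?thesis using True by (simp add: y_def)
      qed
    qed
    ultimately show ?thesis by simp
  qed
  define w where "w b = monom (y b) (ci - cdg m (\<lambda>a. L a b))" for b
  define u where "u a = (\<Sum>b<r. w b * L a b)" for a
  have wi: "w i = [:y i:]" by (simp add: w_def ci_def monom_0)
  have gu: "\<forall>a<m. 1 * u a = (\<Sum>b<r. w b * L a b)" by (simp add: u_def)
  have ud: "\<forall>a<m. u a = 0 \<or> degree (u a) < cdg m (\<lambda>a. L a i)"
  proof (intro allI impI)
    fix a assume a: "a < m"
    have terms: "degree (w b * L a b) \<le> ci \<and> coeff (w b * L a b) ci = y b * coeff (L a b) (cdg m (\<lambda>a. L a b))"
      if b: "b \<in> {..<r}" for b
    proof (cases "y b = 0")
      case True
      then show ?thesis by (simp add: w_def)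
    next
      case False
      then have "b \<in> B" by (simp add: y_def split: if_splits)
      then have le: "cdg m (\<lambda>a. L a b) \<le> ci" using imax by (simp add: ci_def)
      have "degree (w b * L a b) \<le> degree (w b) + degree (L a b)" by (rule degree_mult_le)
      also have "\<dots> \<le> (ci - cdg m (\<lambda>a. L a b)) + cdg m (\<lambda>a. L a b)"
        using deg_le_cdg[OF a, of "\<lambda>a. L a b"] degree_monom_le[of "y b" "ci - cdg m (\<lambda>a. L a b)"]
        by (simp add: w_def)
      also have "\<dots> = ci" using le by simp
      finally have "degree (w b * L a b) \<le> ci" .
      moreover have "coeff (w b * L a b) ci = y b * coeff (L a b) (cdg m (\<lambda>a. L a b))"
        using le by (simp add: w_def coeff_monom_mult)
      ultimately show ?thesis by simp
    qed
    have du: "degree (u a) \<le> ci" unfolding u_def by (rule degree_sum_le) (use terms in auto)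
    have cu: "coeff (u a) ci = 0"
      unfolding u_def coeff_sum using terms C[OF a] by simp
    show "u a = 0 \<or> degree (u a) < cdg m (\<lambda>a. L a i)"
    proof (rule ccontr)
      assume h: "\<not> (u a = 0 \<or> degree (u a) < cdg m (\<lambda>a. L a i))"
      then have "degree (u a) = ci" using du by (simp add: ci_def)
      then have "lead_coeff (u a) = 0" using cu by simp
      then show False using h by simp
    qed
  qed
  show False
    using no_reduce[OF minL rlX one_neq_zero ir nz wi yi gu ud] .
qed

lemma factor_main:
  fixes P L0 Y0 :: "nat \<Rightarrow> nat \<Rightarrow> complex poly"
  assumes rl0: "rel m n r P q0 L0 Y0" and q0: "q0 \<noteq> 0"
    and degP: "\<forall>a<m. \<forall>j<n. degree (P a j) \<le> d"
  shows "\<exists>L X. rel m n r P 1 L X \<and>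
     (\<forall>b<r. \<forall>j<n. X b j \<noteq> 0 \<longrightarrow> (\<exists>a<m. L a b \<noteq> 0) \<and> cdg m (\<lambda>a. L a b) + degree (X b j) \<le> d)"
proof -
  have "\<exists>L. (\<exists>q Y. q \<noteq> 0 \<and> rel m n r P q L Y) \<and>
     (\<forall>L'. (\<exists>q Y. q \<noteq> 0 \<and> rel m n r P q L' Y) \<longrightarrow> mu m r L \<le> mu m r L')"
    by (rule ex_has_least_nat[of _ L0]) (use rl0 q0 in blast)
  then obtain L where adm: "\<exists>q Y. q \<noteq> 0 \<and> rel m n r P q L Y"
    and minL: "\<forall>L'. (\<exists>q Y. q \<noteq> 0 \<and> rel m n r P q L' Y) \<longrightarrow> mu m r L \<le> mu m r L'" by blast
  obtain X where rl: "rel m n r P 1 L X" using stepA[OF minL adm] by blast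
  define Xh where "Xh b j = (if \<exists>a<m. L a b \<noteq> 0 then X b j else 0)" for b j
  have rlX: "rel m n r P 1 L Xh" unfolding Xh_def by (rule rel_normalize[OF rl])
  have B: "\<forall>b<r. \<forall>j<n. Xh b j \<noteq> 0 \<longrightarrow> cdg m (\<lambda>a. L a b) + degree (Xh b j) \<le> d"
    using stepB[OF minL rl degP] unfolding Xh_def by blast
  have "\<forall>b<r. \<forall>j<n. Xh b j \<noteq> 0 \<longrightarrow> (\<exists>a<m. L a b \<noteq> 0)"
    by (auto simp: Xh_def split: if_splits)
  then show ?thesis using rlX B by blast
qed

lemma pvec_degree_eq:
  assumes "\<exists>i<dim_vec v. v $ i \<noteq> 0" "\<forall>i<dim_vec v. degree (v $ i) \<le> e"
    "\<exists>i<dim_vec v. degree (v $ i) = e"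
  shows "pvec_degree v = ereal (real e)"
proof -
  have "Max {degree (v $ i) | i. i < dim_vec v} = e"
    by (rule Max_eqI) (use assms in \<open>auto intro: finite_image_set\<close>)
  then show ?thesis using assms(1) unfolding pvec_degree_def by auto
qed

lemma term_expand:
  fixes l x a b :: "'a::comm_ring_1 poly"
  shows "(l + [:t:] * a) * (x + [:t:] * b) = l * x + [:t:] * (a * x + l * b) + [:t^2:] * (a * b)"
proof -
  have "[:t^2:] = [:t:] * [:t:]" by (simp add: power2_eq_square)
  then show ?thesis by (simp add: algebra_simps)
qed

lemma pad:
  fixes P L X :: "nat \<Rightarrow> nat \<Rightarrow> complex poly"
  assumes m: "0 < m" and n: "0 < n"
    and rl: "rel m n r P 1 L X"
    and good: "\<forall>b<r. \<forall>j<n. X b j \<noteq> 0 \<longrightarrow> (\<exists>a<m. L a b \<noteq> 0) \<and> cdg m (\<lambda>a. L a b) + degree (X b j) \<le> d"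
  shows "\<exists>E1 E2. \<forall>t. t \<noteq> 0 \<longrightarrow> (\<exists>Lm Rm. Lm \<in> carrier_mat m r \<and> Rm \<in> carrier_mat r n \<and>
    (\<forall>b<r. pvec_degree (col Lm b) + pvec_degree (row Rm b) = ereal (real d)) \<and>
    (\<forall>a<m. \<forall>j<n. (Lm * Rm) $$ (a,j) = P a j + [:t:] * E1 a j + [:t^2:] * E2 a j))"
proof -
  define Z where "Z b = (\<not> (\<exists>a<m. L a b \<noteq> 0) \<or> (\<forall>j<n. X b j = 0))" for b
  define \<delta> where "\<delta> b = cdg m (\<lambda>a. L a b)" for b
  define \<rho> where "\<rho> b = cdg n (\<lambda>j. X b j)" for b
  define N where "N b = (\<not> Z b \<and> \<delta> b + \<rho> b < d)" for b
  define L' where "L' a b = (if Z b then 0 else L a b)" for a b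
  define X' where "X' b j = (if Z b then 0 else X b j)" for b j
  define A where "A (a::nat) b = (if a = 0 then (if Z b then monom 1 d else if N b then monom 1 (d - \<rho> b) else 0) else (0::complex poly))" for a b
  define Bm where "Bm b (j::nat) = (if Z b \<and> j = 0 then 1 else (0::complex poly))" for b j
  define E1 where "E1 a j = (\<Sum>b<r. A a b * X' b j + L' a b * Bm b j)" for a j
  define E2 where "E2 a j = (\<Sum>b<r. A a b * Bm b j)" for a j
  have sumdeg: "\<delta> b + \<rho> b \<le> d" if b: "b < r" "\<not> Z b" for b
  proof -
    obtain j0 where j0: "j0 < n" "degree (X b j0) = \<rho> b" using cdg_attained[OF n] \<rho>_def by metis
    obtain j1 where j1: "j1 < n" "X b j1 \<noteq> 0" using b by (auto simp: Z_def)
    show ?thesis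
    proof (cases "X b j0 = 0")
      case True
      then have "\<rho> b = 0" using j0 by simp
      moreover have "\<delta> b \<le> d" using good b j1 by (force simp: \<delta>_def)
      ultimately show ?thesis by simp
    next
      case False
      then show ?thesis using good b j0 by (force simp: \<delta>_def)
    qed
  qed
  have "\<forall>t. t \<noteq> 0 \<longrightarrow> (\<exists>Lm Rm. Lm \<in> carrier_mat m r \<and> Rm \<in> carrier_mat r n \<and>
    (\<forall>b<r. pvec_degree (col Lm b) + pvec_degree (row Rm b) = ereal (real d)) \<and>
    (\<forall>a<m. \<forall>j<n. (Lm * Rm) $$ (a,j) = P a j + [:t:] * E1 a j + [:t^2:] * E2 a j))"
  proof (intro allI impI)
    fix t :: complex assume t: "t \<noteq> 0"
    define Lt where "Lt a b = L' a b + [:t:] * A a b" for a b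
    define Rt where "Rt b j = X' b j + [:t:] * Bm b j" for b j
    define Lm where "Lm = mat m r (\<lambda>(a,b). Lt a b)"
    define Rm where "Rm = mat r n (\<lambda>(b,j). Rt b j)"
    have Lm: "Lm \<in> carrier_mat m r" and Rm: "Rm \<in> carrier_mat r n" by (auto simp: Lm_def Rm_def)
    have prod: "(Lm * Rm) $$ (a,j) = P a j + [:t:] * E1 a j + [:t^2:] * E2 a j" if a: "a < m" and j: "j < n" for a j
    proof -
      have "(Lm * Rm) $$ (a,j) = (\<Sum>b<r. Lt a b * Rt b j)"
        using mult_index'[OF Lm Rm a j] a j by (simp add: Lm_def Rm_def)
      also have "\<dots> = (\<Sum>b<r. L' a b * X' b j + [:t:] * (A a b * X' b j + L' a b * Bm b j) + [:t^2:] * (A a b * Bm b j))"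
        unfolding Lt_def Rt_def by (simp only: term_expand)
      also have "\<dots> = (\<Sum>b<r. L' a b * X' b j) + [:t:] * E1 a j + [:t^2:] * E2 a j"
      proof -
        have e1: "[:t:] * E1 a j = (\<Sum>b<r. [:t:] * (A a b * X' b j + L' a b * Bm b j))"
          unfolding E1_def by (rule sum_distrib_left)
        have e2: "[:t^2:] * E2 a j = (\<Sum>b<r. [:t^2:] * (A a b * Bm b j))"
          unfolding E2_def by (rule sum_distrib_left)
        show ?thesis unfolding e1 e2 by (simp only: sum.distrib)
      qed
      also have "(\<Sum>b<r. L' a b * X' b j) = (\<Sum>b<r. L a b * X b j)"
        using a j by (intro sum.cong) (auto simp: L'_def X'_def Z_def)
      also have "\<dots> = P a j" using rl a j by (simp add: rel_def)
      finally show ?thesis .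
    qed
    have degs: "pvec_degree (col Lm b) + pvec_degree (row Rm b) = ereal (real d)" if b: "b < r" for b
    proof -
      have colv: "dim_vec (col Lm b) = m" "\<And>a. a < m \<Longrightarrow> col Lm b $ a = Lt a b" "dim_row Lm = m"
        using b by (auto simp: Lm_def)
      have rowv: "dim_vec (row Rm b) = n" "\<And>j. j < n \<Longrightarrow> row Rm b $ j = Rt b j" "dim_col Rm = n"
        using b by (auto simp: Rm_def)
      show ?thesis
      proof (cases "Z b")
        case True
        have Lt0: "Lt a b = (if a = 0 then monom t d else 0)" for a
          using True by (simp add: Lt_def L'_def A_def smult_monom)
        have Rt0: "Rt b j = (if j = 0 then [:t:] else 0)" for j
          using True by (simp add: Rt_def X'_def Bm_def)
        have "pvec_degree (col Lm b) = ereal (real d)"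
          by (rule pvec_degree_eq) (use m t in \<open>auto simp: colv Lt0 degree_monom_eq\<close>)
        moreover have "pvec_degree (row Rm b) = ereal (real 0)"
          by (rule pvec_degree_eq) (use n t in \<open>auto simp: rowv Rt0\<close>)
        ultimately show ?thesis by simp
      next
        case False
        have Rt1: "Rt b j = X b j" for j using False by (simp add: Rt_def X'_def Bm_def)
        obtain j1 where j1: "j1 < n" "X b j1 \<noteq> 0" using False by (auto simp: Z_def)
        obtain a1 where a1: "a1 < m" "L a1 b \<noteq> 0" using False by (auto simp: Z_def)
        have rowdeg: "pvec_degree (row Rm b) = ereal (real (\<rho> b))"
        proof (rule pvec_degree_eq)
          show "\<exists>i<dim_vec (row Rm b). row Rm b $ i \<noteq> 0" using j1 by (auto simp: rowv Rt1)
          show "\<forall>i<dim_vec (row Rm b). degree (row Rm b $ i) \<le> \<rho> b"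
            by (auto simp: rowv Rt1 \<rho>_def intro: deg_le_cdg)
          show "\<exists>i<dim_vec (row Rm b). degree (row Rm b $ i) = \<rho> b"
            using cdg_attained[OF n, of "\<lambda>j. X b j"] by (auto simp: rowv Rt1 \<rho>_def)
        qed
        have sd: "\<delta> b + \<rho> b \<le> d" using sumdeg b False by blast
        show ?thesis
        proof (cases "N b")
          case True
          have lt: "\<delta> b < d - \<rho> b" using True unfolding N_def by linarith
          have Lt1: "Lt a b = (if a = 0 then L 0 b + monom t (d - \<rho> b) else L a b)" for a
            using True False by (simp add: Lt_def L'_def A_def smult_monom)
          have d0: "degree (L 0 b + monom t (d - \<rho> b)) = d - \<rho> b"
          proof -
            have "degree (L 0 b) \<le> \<delta> b" using deg_le_cdg[OF m] by (simp add: \<delta>_def)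
            then have "degree (L 0 b) < degree (monom t (d - \<rho> b))" using lt t by (simp add: degree_monom_eq)
            then show ?thesis using t by (simp add: degree_add_eq_right degree_monom_eq)
          qed
          have "pvec_degree (col Lm b) = ereal (real (d - \<rho> b))"
          proof (rule pvec_degree_eq)
            show "\<exists>i<dim_vec (col Lm b). col Lm b $ i \<noteq> 0"
              using m d0 lt by (intro exI[of _ 0]) (auto simp: colv Lt1)
            show "\<forall>i<dim_vec (col Lm b). degree (col Lm b $ i) \<le> d - \<rho> b"
            proof (intro allI impI)
              fix i assume "i < dim_vec (col Lm b)"
              then have i: "i < m" by (simp add: colv)
              show "degree (col Lm b $ i) \<le> d - \<rho> b"
              proof (cases "i = 0")
                case True then show ?thesis using i d0 by (simp add: colv Lt1)
              next
                case False
                then show ?thesis using i deg_le_cdg[OF i, of "\<lambda>a. L a b"] lt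
                  by (simp add: colv Lt1 \<delta>_def)
              qed
            qed
            show "\<exists>i<dim_vec (col Lm b). degree (col Lm b $ i) = d - \<rho> b"
              using m d0 by (intro exI[of _ 0]) (auto simp: colv Lt1)
          qed
          then show ?thesis using rowdeg sd by simp
        next
          case False2: False
          have Lt1: "Lt a b = L a b" for a
            using False False2 by (simp add: Lt_def L'_def A_def)
          have "pvec_degree (col Lm b) = ereal (real (\<delta> b))"
          proof (rule pvec_degree_eq)
            show "\<exists>i<dim_vec (col Lm b). col Lm b $ i \<noteq> 0" using a1 by (auto simp: colv Lt1)
            show "\<forall>i<dim_vec (col Lm b). degree (col Lm b $ i) \<le> \<delta> b"
              by (auto simp: colv Lt1 \<delta>_def intro: deg_le_cdg)
            show "\<exists>i<dim_vec (col Lm b). degree (col Lm b $ i) = \<delta> b"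
              using cdg_attained[OF m, of "\<lambda>a. L a b"] by (auto simp: colv Lt1 \<delta>_def)
          qed
          moreover have "\<delta> b + \<rho> b = d" using sd False False2 by (simp add: N_def)
          ultimately show ?thesis using rowdeg by (simp flip: of_nat_add)
        qed
      qed
    qed
    show "\<exists>Lm Rm. Lm \<in> carrier_mat m r \<and> Rm \<in> carrier_mat r n \<and>
      (\<forall>b<r. pvec_degree (col Lm b) + pvec_degree (row Rm b) = ereal (real d)) \<and>
      (\<forall>a<m. \<forall>j<n. (Lm * Rm) $$ (a,j) = P a j + [:t:] * E1 a j + [:t^2:] * E2 a j)"
      using Lm Rm degs prod by blast
  qed
  then show ?thesis by blast
qed

lemma small_pert:
  fixes c1 c2 :: "nat \<Rightarrow> nat \<Rightarrow> nat \<Rightarrow> complex" and \<epsilon> :: real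
  assumes eps: "\<epsilon> > 0"
  shows "\<exists>t::real. t > 0 \<and> sqrt (\<Sum>k\<le>d. \<Sum>a<m. \<Sum>j<n.
     (cmod (complex_of_real t * c1 k a j + (complex_of_real t)^2 * c2 k a j))\<^sup>2) < \<epsilon>"
proof -
  define K where "K = (\<Sum>k\<le>d. \<Sum>a<m. \<Sum>j<n. (cmod (c1 k a j) + cmod (c2 k a j))\<^sup>2)"
  have K0: "0 \<le> K" unfolding K_def by (intro sum_nonneg) auto
  define t where "t = min 1 (\<epsilon> / (K + 1))"
  have t0: "0 < t" using eps K0 by (simp add: t_def)
  have t1: "t \<le> 1" by (simp add: t_def)
  have t2: "t * (K + 1) \<le> \<epsilon>"
  proof -
    have "t \<le> \<epsilon> / (K + 1)" by (simp add: t_def)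
    then have "t * (K + 1) \<le> \<epsilon> / (K + 1) * (K + 1)" using K0 by (intro mult_right_mono) auto
    then show ?thesis using K0 by simp
  qed
  have trm: "(cmod (complex_of_real t * c1 k a j + (complex_of_real t)^2 * c2 k a j))\<^sup>2
      \<le> t\<^sup>2 * (cmod (c1 k a j) + cmod (c2 k a j))\<^sup>2" for k a j
  proof -
    have "cmod (complex_of_real t * c1 k a j + (complex_of_real t)^2 * c2 k a j)
        \<le> t * cmod (c1 k a j) + t\<^sup>2 * cmod (c2 k a j)"
      using t0 by (rule_tac order_trans[OF norm_triangle_ineq]) (simp add: norm_mult norm_power)
    also have "\<dots> \<le> t * (cmod (c1 k a j) + cmod (c2 k a j))"
    proof -
      have "t\<^sup>2 \<le> t" using t0 t1 by (simp add: power2_eq_square mult_le_cancel_left1)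
      then have "t\<^sup>2 * cmod (c2 k a j) \<le> t * cmod (c2 k a j)" by (intro mult_right_mono) auto
      then show ?thesis by (simp add: algebra_simps)
    qed
    finally have "cmod (complex_of_real t * c1 k a j + (complex_of_real t)^2 * c2 k a j)
        \<le> t * (cmod (c1 k a j) + cmod (c2 k a j))" .
    then have "(cmod (complex_of_real t * c1 k a j + (complex_of_real t)^2 * c2 k a j))\<^sup>2
        \<le> (t * (cmod (c1 k a j) + cmod (c2 k a j)))\<^sup>2"
      by (intro power_mono) auto
    then show ?thesis by (simp add: power_mult_distrib)
  qed
  have "(\<Sum>k\<le>d. \<Sum>a<m. \<Sum>j<n. (cmod (complex_of_real t * c1 k a j + (complex_of_real t)^2 * c2 k a j))\<^sup>2)
      \<le> (\<Sum>k\<le>d. \<Sum>a<m. \<Sum>j<n. t\<^sup>2 * (cmod (c1 k a j) + cmod (c2 k a j))\<^sup>2)"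
    by (intro sum_mono trm)
  also have "\<dots> = t\<^sup>2 * K" by (simp add: K_def sum_distrib_left)
  also have "\<dots> < \<epsilon>\<^sup>2"
  proof -
    have "t\<^sup>2 * K < t\<^sup>2 * (K + 1)" using t0 by simp
    also have "\<dots> \<le> t\<^sup>2 * (K + 1)\<^sup>2"
      using K0 by (intro mult_left_mono) (auto simp: power2_eq_square)
    also have "\<dots> = (t * (K + 1))\<^sup>2" by (simp add: power_mult_distrib)
    also have "\<dots> \<le> \<epsilon>\<^sup>2" using t2 t0 K0 by (intro power_mono) auto
    finally show ?thesis .
  qed
  finally have "sqrt (\<Sum>k\<le>d. \<Sum>a<m. \<Sum>j<n. (cmod (complex_of_real t * c1 k a j + (complex_of_real t)^2 * c2 k a j))\<^sup>2) < sqrt (\<epsilon>\<^sup>2)"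
    by (rule real_sqrt_less_mono)
  then show ?thesis using t0 eps by auto
qed

lemma coeff_le_dist:
  assumes P: "P \<in> carrier_mat m n" and i: "i < m" and j: "j < n" and l: "l \<le> d"
  shows "cmod (coeff (P $$ (i,j)) l - coeff (Q $$ (i,j)) l) \<le> pm_dist d P Q"
proof -
  let ?f = "\<lambda>k i j. (cmod (coeff (P $$ (i, j)) k - coeff (Q $$ (i, j)) k))\<^sup>2"
  have "?f l i j \<le> (\<Sum>j\<in>{..<n}. ?f l i j)" using j by (intro member_le_sum) auto
  also have "\<dots> \<le> (\<Sum>i\<in>{..<m}. \<Sum>j<n. ?f l i j)" using i by (intro member_le_sum[of i]) (auto intro!: sum_nonneg)
  also have "\<dots> \<le> (\<Sum>k\<in>{..d}. \<Sum>i<m. \<Sum>j<n. ?f k i j)" using l by (intro member_le_sum[of l]) (auto intro!: sum_nonneg)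
  finally have "cmod (coeff (P $$ (i, j)) l - coeff (Q $$ (i, j)) l) \<le> sqrt (\<Sum>k\<le>d. \<Sum>i<m. \<Sum>j<n. ?f k i j)"
    by (rule real_le_rsqrt)
  then show ?thesis using P unfolding pm_dist_def by simp
qed

lemma poly_as_sum:
  fixes p :: "complex poly"
  assumes "degree p \<le> d"
  shows "poly p z = (\<Sum>l\<le>d. coeff p l * z ^ l)"
proof -
  have "poly p z = (\<Sum>l\<le>degree p. coeff p l * z ^ l)" by (rule poly_altdef)
  also have "\<dots> = (\<Sum>l\<le>d. coeff p l * z ^ l)"
    using assms by (intro sum.mono_neutral_left) (auto simp: coeff_eq_0)
  finally show ?thesis .
qed

lemma det_tendsto:
  fixes e :: "'b \<Rightarrow> nat \<Rightarrow> nat \<Rightarrow> complex"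
  assumes "\<forall>a<N. \<forall>b<N. ((\<lambda>k. e k a b) \<longlongrightarrow> e0 a b) F"
  shows "((\<lambda>k. det (mat N N (\<lambda>(a,b). e k a b))) \<longlongrightarrow> det (mat N N (\<lambda>(a,b). e0 a b))) F"
proof -
  have eq: "det (mat N N (\<lambda>(a,b). h a b)) = (\<Sum>p\<in>{p. p permutes {0..<N}}. of_int (sign p) * (\<Prod>i\<in>{0..<N}. h i (p i)))"
    for h :: "nat \<Rightarrow> nat \<Rightarrow> complex"
  proof -
    have "det (mat N N (\<lambda>(a,b). h a b)) = (\<Sum>p\<in>{p. p permutes {0..<N}}. of_int (sign p) *
        (\<Prod>i\<in>{0..<N}. (mat N N (\<lambda>(a,b). h a b)) $$ (i, p i)))"
      unfolding det_def dim_row_mat dim_col_mat if_P[OF refl] by (rule refl)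
    also have "\<dots> = (\<Sum>p\<in>{p. p permutes {0..<N}}. of_int (sign p) * (\<Prod>i\<in>{0..<N}. h i (p i)))"
    proof (rule sum.cong[OF refl])
      fix p assume p: "p \<in> {p. p permutes {0..<N}}"
      have "(\<Prod>i\<in>{0..<N}. (mat N N (\<lambda>(a,b). h a b)) $$ (i, p i)) = (\<Prod>i\<in>{0..<N}. h i (p i))"
      proof (rule prod.cong[OF refl])
        fix i assume i: "i \<in> {0..<N}"
        then have "p i \<in> {0..<N}" using p permutes_in_image[of p "{0..<N}" i] by simp
        then show "(mat N N (\<lambda>(a,b). h a b)) $$ (i, p i) = h i (p i)" using i by simp
      qed
      then show "of_int (sign p) * (\<Prod>i\<in>{0..<N}. (mat N N (\<lambda>(a,b). h a b)) $$ (i, p i)) =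
         of_int (sign p) * (\<Prod>i\<in>{0..<N}. h i (p i))" by simp
    qed
    finally show ?thesis .
  qed
  show ?thesis unfolding eq
  proof (rule tendsto_sum)
    fix p assume p: "p \<in> {p. p permutes {0..<N}}"
    have "((\<lambda>k. \<Prod>i\<in>{0..<N}. e k i (p i)) \<longlongrightarrow> (\<Prod>i\<in>{0..<N}. e0 i (p i))) F"
    proof (rule tendsto_prod)
      fix i assume i: "i \<in> {0..<N}"
      then have "p i \<in> {0..<N}" using p permutes_in_image[of p "{0..<N}" i] by simp
      then show "((\<lambda>k. e k i (p i)) \<longlongrightarrow> e0 i (p i)) F" using assms i by simp
    qed
    then show "((\<lambda>k. of_int (sign p) * (\<Prod>i\<in>{0..<N}. e k i (p i))) \<longlongrightarrow>
        of_int (sign p) * (\<Prod>i\<in>{0..<N}. e0 i (p i))) F"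
      by (rule tendsto_mult[OF tendsto_const])
  qed
qed

lemma eval_crh: "comm_ring_hom (\<lambda>p::'a::comm_ring_1 poly. poly p z)"
  by unfold_locales auto

lemma pvec_degree_le:
  assumes "pvec_degree v = ereal x" "i < dim_vec v"
  shows "real (degree (v $ i)) \<le> x"
proof -
  have ne: "\<not> (\<forall>i<dim_vec v. v $ i = 0)" using assms(1) unfolding pvec_degree_def by (auto split: if_splits)
  then have "pvec_degree v = ereal (real (Max {degree (v $ i) | i. i < dim_vec v}))"
    unfolding pvec_degree_def by (simp only: if_False)
  then have "x = real (Max {degree (v $ i) | i. i < dim_vec v})" using assms(1) by simp
  moreover have "degree (v $ i) \<le> Max {degree (v $ i) | i. i < dim_vec v}"
    using assms(2) by (intro Max_ge) (auto intro: finite_image_set)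
  ultimately show ?thesis by simp
qed

lemma pvec_degree_cases: "pvec_degree v = -\<infinity> \<or> (\<exists>x. pvec_degree v = ereal x)"
  unfolding pvec_degree_def by auto

lemma prod_deg:
  assumes L: "L \<in> carrier_mat m r" and R: "R \<in> carrier_mat r n"
    and dg: "\<forall>i<r. pvec_degree (col L i) + pvec_degree (row R i) = ereal (real d)"
    and a: "a < m" and j: "j < n"
  shows "degree ((L * R) $$ (a,j)) \<le> d"
proof -
  have "(L * R) $$ (a,j) = (\<Sum>c<r. L $$ (a,c) * R $$ (c,j))" using mult_index'[OF L R a j] .
  moreover have "degree (\<Sum>c<r. L $$ (a,c) * R $$ (c,j)) \<le> d"
  proof (rule degree_sum_le)
    fix c assume c: "c \<in> {..<r}"
    have e: "pvec_degree (col L c) + pvec_degree (row R c) = ereal (real d)" using dg c by auto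
    obtain x y where x: "pvec_degree (col L c) = ereal x" and y: "pvec_degree (row R c) = ereal y"
      using pvec_degree_cases[of "col L c"] pvec_degree_cases[of "row R c"] e by auto
    have xy: "x + y = real d" using e x y by simp
    have "real (degree (col L c $ a)) \<le> x" using pvec_degree_le[OF x] a L by simp
    moreover have "real (degree (row R c $ j)) \<le> y" using pvec_degree_le[OF y] j R by simp
    moreover have "col L c $ a = L $$ (a,c)" "row R c $ j = R $$ (c,j)" using a j c L R by auto
    ultimately have "real (degree (L $$ (a,c)) + degree (R $$ (c,j))) \<le> real d" using xy by simp
    then have "degree (L $$ (a,c)) + degree (R $$ (c,j)) \<le> d" by linarith
    then show "degree (L $$ (a,c) * R $$ (c,j)) \<le> d" using degree_mult_le order_trans by blast
  qed simp
  ultimately show ?thesis by simp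
qed

lemma closed_part:
  fixes P :: "complex poly mat"
  assumes Pc: "P \<in> pm_closure m n d (prod_set m n r d)"
  shows "normal_rank P \<le> r"
proof (rule ccontr)
  have Ps: "P \<in> polymat_space m n d" using Pc by (simp add: pm_closure_def)
  then have P: "P \<in> carrier_mat m n" and degP: "\<forall>i<m. \<forall>j<n. degree (P $$ (i,j)) \<le> d"
    by (auto simp: polymat_space_def)
  assume "\<not> normal_rank P \<le> r"
  then have "Suc r \<le> vec_space.rank m (map_mat to_fract P)" using P by (simp add: normal_rank_def)
  then obtain f g where fg: "\<forall>a<Suc r. f a < m" "\<forall>b<Suc r. g b < n"
    and dS: "det (mat (Suc r) (Suc r) (\<lambda>(a,b). P $$ (f a, g b))) \<noteq> 0"
    using M1[OF P] by blast
  obtain z where z: "poly (det (mat (Suc r) (Suc r) (\<lambda>(a,b). P $$ (f a, g b)))) z \<noteq> 0"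
    using dS poly_all_0_iff_0 by blast
  define ev where "ev Q a b = poly (Q $$ (f a, g b)) z" for Q :: "complex poly mat" and a b
  have evdet: "det (mat (Suc r) (Suc r) (\<lambda>(a,b). ev Q a b)) = poly (det (mat (Suc r) (Suc r) (\<lambda>(a,b). Q $$ (f a, g b)))) z"
    for Q
  proof -
    have "mat (Suc r) (Suc r) (\<lambda>(a,b). ev Q a b) = map_mat (\<lambda>p. poly p z) (mat (Suc r) (Suc r) (\<lambda>(a,b). Q $$ (f a, g b)))"
      by (rule eq_matI) (auto simp: ev_def)
    then show ?thesis using comm_ring_hom.hom_det[OF eval_crh] by simp
  qed
  have "\<forall>k. \<exists>Q\<in>prod_set m n r d. pm_dist d P Q < inverse (real (Suc k))"
    using Pc unfolding pm_closure_def by auto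
  then obtain Qs where Qs: "\<And>k. Qs k \<in> prod_set m n r d" "\<And>k. pm_dist d P (Qs k) < inverse (real (Suc k))"
    by metis
  have Qinfo: "Qs k \<in> carrier_mat m n \<and> (\<forall>i<m. \<forall>j<n. degree (Qs k $$ (i,j)) \<le> d) \<and>
      vec_space.rank m (map_mat to_fract (Qs k)) \<le> r" for k
  proof -
    obtain L R where LR: "Qs k = L * R" "L \<in> carrier_mat m r" "R \<in> carrier_mat r n"
      "\<forall>i<r. pvec_degree (col L i) + pvec_degree (row R i) = ereal (real d)"
      using Qs(1)[of k] unfolding prod_set_def by blast
    show ?thesis using LR prod_deg[OF LR(2,3,4)] normal_rank_mult[OF LR(2,3)] by auto
  qed
  have conv: "((\<lambda>k. ev (Qs k) a b) \<longlongrightarrow> ev P a b) sequentially" if a: "a < Suc r" and b: "b < Suc r" for a b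
  proof -
    have ia: "f a < m" and jb: "g b < n" using fg a b by auto
    have cc: "((\<lambda>k. coeff (Qs k $$ (f a, g b)) l) \<longlongrightarrow> coeff (P $$ (f a, g b)) l) sequentially"
      if l: "l \<le> d" for l
    proof -
      have "((\<lambda>k. coeff (Qs k $$ (f a, g b)) l - coeff (P $$ (f a, g b)) l) \<longlongrightarrow> 0) sequentially"
      proof (rule tendsto_0_le[OF LIMSEQ_inverse_real_of_nat, of _ 1])
        show "\<forall>\<^sub>F k in sequentially. norm (coeff (Qs k $$ (f a, g b)) l - coeff (P $$ (f a, g b)) l)
            \<le> norm (inverse (real (Suc k))) * 1"
        proof (rule always_eventually, rule allI)
          fix k
          have "norm (coeff (Qs k $$ (f a, g b)) l - coeff (P $$ (f a, g b)) l)
             = cmod (coeff (P $$ (f a, g b)) l - coeff (Qs k $$ (f a, g b)) l)"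
            by (simp add: norm_minus_commute)
          also have "\<dots> \<le> pm_dist d P (Qs k)" by (rule coeff_le_dist[OF P ia jb l])
          also have "\<dots> \<le> norm (inverse (real (Suc k))) * 1" using Qs(2)[of k] by simp
          finally show "norm (coeff (Qs k $$ (f a, g b)) l - coeff (P $$ (f a, g b)) l)
            \<le> norm (inverse (real (Suc k))) * 1" .
        qed
      qed
      then show ?thesis by (simp add: LIM_zero_iff)
    qed
    have "ev (Qs k) a b = (\<Sum>l\<le>d. coeff (Qs k $$ (f a, g b)) l * z ^ l)" for k
      unfolding ev_def using Qinfo[of k] ia jb by (intro poly_as_sum) auto
    moreover have "ev P a b = (\<Sum>l\<le>d. coeff (P $$ (f a, g b)) l * z ^ l)"
      unfolding ev_def using degP ia jb by (intro poly_as_sum) auto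
    moreover have "((\<lambda>k. \<Sum>l\<le>d. coeff (Qs k $$ (f a, g b)) l * z ^ l) \<longlongrightarrow> (\<Sum>l\<le>d. coeff (P $$ (f a, g b)) l * z ^ l)) sequentially"
    proof (rule tendsto_sum)
      fix l assume "l \<in> {..d}"
      then have "l \<le> d" by simp
      then show "((\<lambda>k. coeff (Qs k $$ (f a, g b)) l * z ^ l) \<longlongrightarrow> coeff (P $$ (f a, g b)) l * z ^ l) sequentially"
        by (rule tendsto_mult[OF cc tendsto_const])
    qed
    ultimately show ?thesis by simp
  qed
  have "((\<lambda>k. det (mat (Suc r) (Suc r) (\<lambda>(a,b). ev (Qs k) a b))) \<longlongrightarrow> det (mat (Suc r) (Suc r) (\<lambda>(a,b). ev P a b))) sequentially"
    by (rule det_tendsto) (use conv in blast)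
  moreover have "det (mat (Suc r) (Suc r) (\<lambda>(a,b). ev P a b)) \<noteq> 0" using evdet z by simp
  ultimately have "\<forall>\<^sub>F k in sequentially. det (mat (Suc r) (Suc r) (\<lambda>(a,b). ev (Qs k) a b)) \<noteq> 0"
    by (rule tendsto_imp_eventually_ne)
  then obtain N where N: "\<forall>k\<ge>N. det (mat (Suc r) (Suc r) (\<lambda>(a,b). ev (Qs k) a b)) \<noteq> 0"
    unfolding eventually_sequentially by blast
  define k where "k = N"
  have "det (mat (Suc r) (Suc r) (\<lambda>(a,b). ev (Qs k) a b)) \<noteq> 0" using N by (simp add: k_def)
  then have "det (mat (Suc r) (Suc r) (\<lambda>(a,b). Qs k $$ (f a, g b))) \<noteq> 0" using evdet by auto
  then have "Suc r \<le> vec_space.rank m (map_mat to_fract (Qs k))"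
    using M2[of "Qs k" m n "Suc r" f g] Qinfo[of k] fg by blast
  then show False using Qinfo[of k] by simp
qed

theorem theorem4p2:
  fixes m n r d :: nat
  assumes "m \<ge> 2" and "n \<ge> 2" and "d \<ge> 1" and "0 < r" and "r < min m n"
  shows "polymat_rank_le m n d r = pm_closure m n d (prod_set m n r d)"
proof (rule subset_antisym; rule subsetI)
  fix P assume Pin: "P \<in> polymat_rank_le m n d r"
  then have Ps: "P \<in> polymat_space m n d" and rk: "normal_rank P \<le> r"
    by (auto simp: polymat_rank_le_def)
  then have P: "P \<in> carrier_mat m n" and degP: "\<forall>i<m. \<forall>j<n. degree (P $$ (i,j)) \<le> d"
    by (auto simp: polymat_space_def)
  have m0: "0 < m" and n0: "0 < n" using assms by auto
  have rk': "vec_space.rank m (map_mat to_fract P) \<le> r" using rk P by (simp add: normal_rank_def)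
  obtain q L0 Y0 where q: "q \<noteq> 0" and rl0: "\<forall>i<m. \<forall>j<n. q * P $$ (i,j) = (\<Sum>b<r. L0 i b * Y0 b j)"
    using init_fact[OF P rk'] by blast
  have rel0: "rel m n r (\<lambda>a j. P $$ (a,j)) q L0 Y0" using rl0 by (simp add: rel_def)
  obtain L X where rl: "rel m n r (\<lambda>a j. P $$ (a,j)) 1 L X"
    and good: "\<forall>b<r. \<forall>j<n. X b j \<noteq> 0 \<longrightarrow> (\<exists>a<m. L a b \<noteq> 0) \<and> cdg m (\<lambda>a. L a b) + degree (X b j) \<le> d"
    using factor_main[OF rel0 q] degP by blast
  obtain E1 E2 where E: "\<forall>t. t \<noteq> 0 \<longrightarrow> (\<exists>Lm Rm. Lm \<in> carrier_mat m r \<and> Rm \<in> carrier_mat r n \<and>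
    (\<forall>b<r. pvec_degree (col Lm b) + pvec_degree (row Rm b) = ereal (real d)) \<and>
    (\<forall>a<m. \<forall>j<n. (Lm * Rm) $$ (a,j) = P $$ (a,j) + [:t:] * E1 a j + [:t^2:] * E2 a j))"
    using pad[OF m0 n0 rl good] by blast
  have "\<forall>\<epsilon>>0. \<exists>Q\<in>prod_set m n r d. pm_dist d P Q < \<epsilon>"
  proof (intro allI impI)
    fix \<epsilon> :: real assume eps: "\<epsilon> > 0"
    obtain t :: real where tt: "t > 0 \<and> sqrt (\<Sum>k\<le>d. \<Sum>a<m. \<Sum>j<n.
      (cmod (complex_of_real t * coeff (E1 a j) k + (complex_of_real t)^2 * coeff (E2 a j) k))\<^sup>2) < \<epsilon>"
      using small_pert[OF eps, of "\<lambda>k a j. coeff (E1 a j) k" "\<lambda>k a j. coeff (E2 a j) k" n m d] by (rule exE)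
    note t = conjunct1[OF tt] and st = conjunct2[OF tt]
    have t0: "complex_of_real t \<noteq> 0" using t by simp
    obtain Lm Rm where LR: "Lm \<in> carrier_mat m r" "Rm \<in> carrier_mat r n"
      "\<forall>b<r. pvec_degree (col Lm b) + pvec_degree (row Rm b) = ereal (real d)"
      and pr: "\<forall>a<m. \<forall>j<n. (Lm * Rm) $$ (a,j) = P $$ (a,j) + [:complex_of_real t:] * E1 a j
          + [:(complex_of_real t)^2:] * E2 a j"
      using E t0 by blast
    have Q: "Lm * Rm \<in> prod_set m n r d" unfolding prod_set_def using LR by blast
    have "pm_dist d P (Lm * Rm) = sqrt (\<Sum>k\<le>d. \<Sum>a<m. \<Sum>j<n.
      (cmod (complex_of_real t * coeff (E1 a j) k + (complex_of_real t)^2 * coeff (E2 a j) k))\<^sup>2)"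
    proof -
      have "\<And>k a j. a < m \<Longrightarrow> j < n \<Longrightarrow>
          (cmod (coeff (P $$ (a, j)) k - coeff ((Lm * Rm) $$ (a, j)) k))\<^sup>2 =
          (cmod (complex_of_real t * coeff (E1 a j) k + (complex_of_real t)^2 * coeff (E2 a j) k))\<^sup>2"
      proof -
        fix k a j assume a: "a < m" and j: "j < n"
        have "coeff ((Lm * Rm) $$ (a, j)) k = coeff (P $$ (a,j)) k + complex_of_real t * coeff (E1 a j) k
           + (complex_of_real t)^2 * coeff (E2 a j) k"
          using pr a j by simp
        then have "coeff (P $$ (a, j)) k - coeff ((Lm * Rm) $$ (a, j)) k =
           - (complex_of_real t * coeff (E1 a j) k + (complex_of_real t)^2 * coeff (E2 a j) k)" by simp
        then show "(cmod (coeff (P $$ (a, j)) k - coeff ((Lm * Rm) $$ (a, j)) k))\<^sup>2 =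
          (cmod (complex_of_real t * coeff (E1 a j) k + (complex_of_real t)^2 * coeff (E2 a j) k))\<^sup>2"
          by (simp only: norm_minus_cancel)
      qed
      then show ?thesis using P unfolding pm_dist_def by (intro arg_cong[of _ _ sqrt] sum.cong refl) auto
    qed
    then have "pm_dist d P (Lm * Rm) < \<epsilon>" using st by simp
    then show "\<exists>Q\<in>prod_set m n r d. pm_dist d P Q < \<epsilon>" using Q by blast
  qed
  then show "P \<in> pm_closure m n d (prod_set m n r d)" using Ps by (simp add: pm_closure_def)
next
  fix P assume "P \<in> pm_closure m n d (prod_set m n r d)"
  then show "P \<in> polymat_rank_le m n d r"
    using closed_part[of P m n d r] unfolding polymat_rank_le_def pm_closure_def by blast
qed

end
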